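(* For every unweighted congestion game $\mathcal{G}$ with quadratic latency functions, $\mathrm{Apx}^1_\emptyset(\mathcal{G})\le 37.5888$.
   Context: A weighted congestion game consists of a finite set $[n]=\{1,\dots,n\}$ of players, a finite set $E$ of resources, for each player $i$ a weight $w_i>0$ and a nonempty finite strategy set $\Sigma_i\subseteq 2^E$, and for each resource $e$ a latency function $\ell_e:\mathbb{R}_{\ge 0}\to\mathbb{R}_{\ge 0}$. It is unweighted if $w_i=1$ for all $i$. Quadratic latency functions means $\ell_e(x)=\sum_{j=0}^{2}\alpha_{e,j}x^j$ with all $\alpha_{e,j}\ge 0$. For a (possibly partial) profile in which each player in some subset $P\subseteq[n]$ has chosen a strategy $s_i$, the congestion of $e$ is $L_e=\sum_{i\in P:\,e\in s_i}w_i$ and the cost of a player $i\in P$ is $\sum_{e\in s_i}\ell_e(L_e)$. For a full profile $S$, $\mathrm{SUM}(S)=\sum_{i\in[n]}c_i(S)$ and $S^*$ minimizes $\mathrm{SUM}$. A one-round walk from the empty strategy profile: starting with no player having chosen a strategy, the players arrive one at a time in some order, and each arriving player selects a best response, i.e., a strategy in her strategy set minimizing her cost given the strategies already chosen by the previously arrived players (later players not yet present); the outcome is the full profile after all $n$ players have chosen. $\mathrm{Apx}^1_\emptyset(\mathcal{G})$ is the maximum, over all orderings of the players and all choices among best responses, of $\mathrm{SUM}(\text{outcome})/\mathrm{SUM}(S^* )$. *)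

theory Defs
  imports Main "HOL-Library.Multiset" Complex_Main
begin

text \<open>Players are 0..<n; a (partial) profile is a
function s from players to strategies (sets of resources); only the players
in the set P of present players contribute to congestion.\<close>

definition load :: "nat set \<Rightarrow> (nat \<Rightarrow> 'e set) \<Rightarrow> 'e \<Rightarrow> nat" where
  "load P s e = card {i \<in> P. e \<in> s i}"

definition player_cost :: "('e \<Rightarrow> real \<Rightarrow> real) \<Rightarrow> nat set \<Rightarrow> (nat \<Rightarrow> 'e set) \<Rightarrow> nat \<Rightarrow> real" where
  "player_cost lat P s i = (\<Sum>e\<in>s i. lat e (real (load P s e)))"

definition SUM_cost :: "nat \<Rightarrow> ('e \<Rightarrow> real \<Rightarrow> real) \<Rightarrow> (nat \<Rightarrow> 'e set) \<Rightarrow> real" where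
  "SUM_cost n lat s = (\<Sum>i<n. player_cost lat {..<n} s i)"

text \<open>Player i, arriving when the players in P have already chosen (in s),
picks a best response s i.\<close>
definition best_response :: "(nat \<Rightarrow> 'e set set) \<Rightarrow> ('e \<Rightarrow> real \<Rightarrow> real) \<Rightarrow> nat set
    \<Rightarrow> (nat \<Rightarrow> 'e set) \<Rightarrow> nat \<Rightarrow> bool" where
  "best_response Strat lat P s i \<longleftrightarrow> s i \<in> Strat i \<and>
     (\<forall>t \<in> Strat i. player_cost lat (insert i P) s i \<le> player_cost lat (insert i P) (s(i := t)) i)"

definition one_round_walk :: "nat \<Rightarrow> (nat \<Rightarrow> 'e set set) \<Rightarrow> ('e \<Rightarrow> real \<Rightarrow> real)
    \<Rightarrow> nat list \<Rightarrow> (nat \<Rightarrow> 'e set) \<Rightarrow> bool" where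
  "one_round_walk n Strat lat ord s \<longleftrightarrow> distinct ord \<and> set ord = {..<n} \<and>
     (\<forall>k < length ord. best_response Strat lat (set (take k ord)) s (ord ! k))"

definition quadratic_latency :: "('e \<Rightarrow> real \<Rightarrow> real) \<Rightarrow> 'e set \<Rightarrow> bool" where
  "quadratic_latency lat E \<longleftrightarrow> (\<forall>e\<in>E. \<exists>a0 a1 a2::real. a0 \<ge> 0 \<and> a1 \<ge> 0 \<and> a2 \<ge> 0 \<and>
      (\<forall>x\<ge>0. lat e x = a0 + a1 * x + a2 * x^2))"

end

theory Submission
  imports Defs
begin
lemma cubic_aux:
  fixes y u :: real assumes "y \<ge> 0" "u \<ge> 0"
  shows "(23493/625)*y^3 - (3309/625)*y*u^2 + (478/625)*u^3 \<ge> 0"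
proof -
  define c :: real where "c = (5417/25000)"
  have id: "(23493/625)*y^3 - (3309/625)*y*u^2 + (478/625)*u^3 = (y - c*u)^2*((23493/625)*y + 2*(23493/625)*c*u)
      + (3*(23493/625)*c^2 - (3309/625))*y*u^2 + ((478/625) - 2*(23493/625)*c^3)*u^3"
    by (simp add: c_def algebra_simps power2_eq_square power3_eq_cube)
  have k1: "3*(23493/625)*c^2 - (3309/625) \<ge> 0" by (simp add: c_def power2_eq_square)
  have k2: "(478/625) - 2*(23493/625)*c^3 \<ge> 0" by (simp add: c_def power3_eq_cube)
  have c0: "c \<ge> 0" by (simp add: c_def)
  show ?thesis unfolding id
    by (intro add_nonneg_nonneg mult_nonneg_nonneg k1 k2 assms c0 zero_le_power2 zero_le_power) simp_all
qed

lemma D2: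
  fixes x y :: nat
  shows "(23493/625)*real y^3 + (3309/625)*(real x*(real x+1)*(2*real x+1)/6) - real x^3 - (3309/625)*real y*(real x+1)^2 \<ge> 0"
proof -
  consider "y = 0" | "x \<ge> 5" | "y = 1 \<and> x \<le> 4" | "y \<ge> 2 \<and> x \<le> 4" by linarith
  then show ?thesis
  proof cases
    case 1
    have "real x^3 \<le> (3309/625)*(real x*(real x+1)*(2*real x+1)/6)"
      by (simp add: algebra_simps power2_eq_square power3_eq_cube)
    then show ?thesis using 1 by simp
  next
    case 2
    have c: "(23493/625)*real y^3 - (3309/625)*real y*(real x+1)^2 + (478/625)*(real x+1)^3 \<ge> 0"
      by (rule cubic_aux) auto
    have x5: "real x \<ge> 5" using 2 by simp
    have "real x * (real x - 5) \<ge> 0" using x5 by simp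
    then have "real x^2 \<ge> 5 * real x" by (simp add: algebra_simps power2_eq_square)
    then have "(441/1250)*real x^2 - (353/250)*real x - (478/625) \<ge> 0"
      using x5 by (simp add: field_simps)
    moreover have "(3309/625)*(real x*(real x+1)*(2*real x+1)/6) - real x^3 - (478/625)*(real x+1)^3
        = (441/1250)*real x^2 - (353/250)*real x - (478/625)"
      by (simp add: algebra_simps power2_eq_square power3_eq_cube)
    ultimately show ?thesis using c by linarith
  next
    case 3
    then have "x = 0 \<or> x = 1 \<or> x = 2 \<or> x = 3 \<or> x = 4" by auto
    then show ?thesis using 3 by (auto simp: power2_eq_square power3_eq_cube)
  next
    case 4
    have y2: "real y \<ge> 2" using 4 by simp
    have x4: "real x \<le> 4" using 4 by simp
    have "real y^3 \<ge> 4 * real y"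
    proof -
      have "real y * real y \<ge> 4" using y2 by (metis mult_mono' order_trans mult_2 numeral_Bit0 le_add_same_cancel1 zero_le_numeral order.trans  mult_mono) 
      then have "real y * (real y * real y) \<ge> real y * 4" using y2 by simp
      then show ?thesis by (simp add: power3_eq_cube mult.commute)
    qed
    moreover have "(real x+1)^2 \<le> 25"
    proof -
      have "(real x+1)^2 \<le> 5^2" using x4 by (intro power_mono) auto
      then show ?thesis by simp
    qed
    moreover have "real x^3 \<le> (3309/625)*(real x*(real x+1)*(2*real x+1)/6)"
      by (simp add: algebra_simps power2_eq_square power3_eq_cube)
    ultimately have "(3309/625)*real y*(real x+1)^2 \<le> (3309/625)*real y*25"
      using y2 by simp
    then show ?thesis using \<open>real y^3 \<ge> 4 * real y\<close> \<open>real x^3 \<le> _\<close> y2 by linarith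
  qed
qed

lemma D1:
  fixes x y :: nat
  shows "(23493/625)*real y^2 + (3309/625)*(real x*(real x+1)/2) - real x^2 - (3309/625)*real y*(real x+1) \<ge> 0"
proof (cases "y = 0")
  case True
  then show ?thesis by (simp add: algebra_simps power2_eq_square)
next
  case False
  then have y1: "real y \<ge> 1" by simp
  have yy: "real y^2 - real y \<ge> 0" using y1 by (simp add: power2_eq_square)
  have "(23493/625)*real y^2 + (3309/625)*(real x*(real x+1)/2) - real x^2 - (3309/625)*real y*(real x+1)
     = (2059/1250)*(real x - (16071/10000)*real y)^2 + ((23493/625) - (2059/1250)*(16071/10000)^2)*(real y^2 - real y)
       + ((23493/625) - (2059/1250)*(16071/10000)^2 - (3309/625))*real y + (3309/1250) * real x
       + (2*(2059/1250)*(16071/10000) - (3309/625))*(real x*real y)"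
    by (simp add: field_simps power2_eq_square)
  moreover have k1: "(23493/625) - (2059/1250)*(16071/10000)^2 \<ge> (0::real)" by (simp add: power2_eq_square)
  moreover have k2: "(23493/625) - (2059/1250)*(16071/10000)^2 - (3309/625) \<ge> (0::real)" by (simp add: power2_eq_square)
  moreover have k3: "2*(2059/1250)*(16071/10000) - (3309/625) \<ge> (0::real)" by simp
  ultimately show ?thesis using yy
    by (simp only:) (intro add_nonneg_nonneg mult_nonneg_nonneg; simp)
qed


lemma D0:
  fixes x y :: nat
  shows "(23493/625)*real y + (3309/625)*real x - real x - (3309/625)*real y \<ge> 0"
  by simp

lemma sum_poly:
  "(\<Sum>j=1..x. a0 + a1*real j + a2*(real j)^2) =
     a0*real x + a1*(real x*(real x+1)/2) + a2*(real x*(real x+1)*(2*real x+1)/6)"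
  by (induction x) (simp_all add: field_simps power2_eq_square)

lemma per_res:
  fixes f :: "real \<Rightarrow> real" and x y :: nat
  assumes a: "a0 \<ge> 0" "a1 \<ge> 0" "a2 \<ge> 0" and f: "\<forall>z\<ge>0. f z = a0 + a1*z + a2*z^2"
  shows "real x * f (real x) + (3309/625) * real y * f (real x + 1)
     \<le> (3309/625) * (\<Sum>j=1..x. f (real j)) + (23493/625) * real y * f (real y)"
proof -
  have s: "(\<Sum>j=1..x. f (real j)) = (\<Sum>j=1..x. a0 + a1*real j + a2*(real j)^2)"
    using f by (intro sum.cong) auto
  have fx: "f (real x) = a0 + a1*real x + a2*(real x)^2" using f by simp
  have fx1: "f (real x + 1) = a0 + a1*(real x + 1) + a2*(real x + 1)^2" using f by simp
  have fy: "f (real y) = a0 + a1*real y + a2*(real y)^2" using f by simp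
  have id: "(3309/625) * (\<Sum>j=1..x. f (real j)) + (23493/625) * real y * f (real y)
      - (real x * f (real x) + (3309/625) * real y * f (real x + 1))
     = a0 * ((23493/625)*real y + (3309/625)*real x - real x - (3309/625)*real y)
     + a1 * ((23493/625)*real y^2 + (3309/625)*(real x*(real x+1)/2) - real x^2 - (3309/625)*real y*(real x+1))
     + a2 * ((23493/625)*real y^3 + (3309/625)*(real x*(real x+1)*(2*real x+1)/6) - real x^3 - (3309/625)*real y*(real x+1)^2)"
    unfolding s sum_poly fx fx1 fy by (simp add: field_simps power2_eq_square power3_eq_cube)
  have "0 \<le> a0 * ((23493/625)*real y + (3309/625)*real x - real x - (3309/625)*real y)
     + a1 * ((23493/625)*real y^2 + (3309/625)*(real x*(real x+1)/2) - real x^2 - (3309/625)*real y*(real x+1))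
     + a2 * ((23493/625)*real y^3 + (3309/625)*(real x*(real x+1)*(2*real x+1)/6) - real x^3 - (3309/625)*real y*(real x+1)^2)"
    using a D0[of y x] D1[of y x] D2[of y x] by (intro add_nonneg_nonneg mult_nonneg_nonneg) auto
  then show ?thesis using id by linarith
qed

lemma load_insert:
  assumes "finite P" "i \<notin> P"
  shows "load (insert i P) s e = load P s e + (if e \<in> s i then 1 else 0)"
proof -
  have "{j \<in> insert i P. e \<in> s j} = (if e \<in> s i then insert i {j\<in>P. e \<in> s j} else {j\<in>P. e \<in> s j})"
    by auto
  then show ?thesis using assms by (simp add: load_def)
qed

lemma load_upd: "i \<notin> P \<Longrightarrow> load P (s(i:=t)) e = load P s e"
  unfolding load_def by (rule arg_cong[where f=card]) auto

lemma load_mono: "finite Q \<Longrightarrow> P \<subseteq> Q \<Longrightarrow> load P s e \<le> load Q s e"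
  unfolding load_def by (rule card_mono) auto

lemma dcount:
  assumes "finite E" "\<And>i. i<n \<Longrightarrow> T i \<subseteq> E"
  shows "(\<Sum>i<n. \<Sum>e\<in>T i. g e) = (\<Sum>e\<in>E. real (load {..<n} T e) * g e)"
proof -
  have "(\<Sum>i<n. \<Sum>e\<in>T i. g e) = (\<Sum>i<n. \<Sum>e\<in>E. if e \<in> T i then g e else 0)"
  proof (rule sum.cong[OF refl])
    fix i assume "i \<in> {..<n}"
    then have "{e\<in>E. e \<in> T i} = T i" using assms(2) by auto
    then show "(\<Sum>e\<in>T i. g e) = (\<Sum>e\<in>E. if e \<in> T i then g e else 0)"
      using sum.inter_filter[OF assms(1), of g "\<lambda>e. e \<in> T i"] by simp
  qed
  also have "\<dots> = (\<Sum>e\<in>E. \<Sum>i<n. if e \<in> T i then g e else 0)" by (rule sum.swap)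
  also have "\<dots> = (\<Sum>e\<in>E. real (load {..<n} T e) * g e)"
  proof (rule sum.cong[OF refl])
    fix e
    have "(\<Sum>i<n. if e \<in> T i then g e else 0) = (\<Sum>i\<in>{i\<in>{..<n}. e \<in> T i}. g e)"
      by (rule sum.inter_filter[symmetric]) simp
    also have "\<dots> = real (card {i\<in>{..<n}. e \<in> T i}) * g e" by simp
    finally show "(\<Sum>i<n. if e \<in> T i then g e else 0) = real (load {..<n} T e) * g e"
      by (simp add: load_def)
  qed
  finally show ?thesis .
qed


theorem mainTheorem11:
  fixes n :: nat and E :: "'e set" and Strat :: "nat \<Rightarrow> 'e set set"
    and lat :: "'e \<Rightarrow> real \<Rightarrow> real" and ord :: "nat list" and s S :: "nat \<Rightarrow> 'e set"
  assumes "finite E"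
    and "\<forall>i<n. Strat i \<noteq> {} \<and> finite (Strat i) \<and> Strat i \<subseteq> Pow E"
    and "quadratic_latency lat E"
    and "one_round_walk n Strat lat ord s"
    and "\<forall>i<n. S i \<in> Strat i"
  shows "SUM_cost n lat s \<le> 37.5888 * SUM_cost n lat S"
proof -
  define x where "x e = load {..<n} s e" for e
  define y where "y e = load {..<n} S e" for e
  have "\<forall>e\<in>E. \<exists>c::real\<times>real\<times>real. fst c \<ge> 0 \<and> fst (snd c) \<ge> 0 \<and> snd (snd c) \<ge> 0 \<and>
      (\<forall>z\<ge>0. lat e z = fst c + fst (snd c) * z + snd (snd c) * z^2)"
    using assms(3) unfolding quadratic_latency_def by fastforce
  then obtain C where C: "\<forall>e\<in>E. fst (C e) \<ge> 0 \<and> fst (snd (C e)) \<ge> 0 \<and> snd (snd (C e)) \<ge> 0 \<and>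
      (\<forall>z\<ge>0. lat e z = fst (C e) + fst (snd (C e)) * z + snd (snd (C e)) * z^2)"
    by metis
  have mono: "lat e a \<le> lat e b" if e: "e \<in> E" and ab: "0 \<le> a" "a \<le> b" for e a b
  proof -
    have c: "fst (C e) \<ge> 0" "fst (snd (C e)) \<ge> 0" "snd (snd (C e)) \<ge> 0"
      and f: "\<forall>z\<ge>0. lat e z = fst (C e) + fst (snd (C e)) * z + snd (snd (C e)) * z^2"
      using C e by auto
    have "fst (snd (C e)) * a \<le> fst (snd (C e)) * b" using c ab by (intro mult_left_mono) auto
    moreover have "snd (snd (C e)) * a^2 \<le> snd (snd (C e)) * b^2"
      using c ab by (intro mult_left_mono power_mono) auto
    ultimately show ?thesis using f ab by simp
  qed
  have dist: "distinct ord" and setord: "set ord = {..<n}"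
    and br: "\<And>k. k < length ord \<Longrightarrow> best_response Strat lat (set (take k ord)) s (ord ! k)"
    using assms(4) unfolding one_round_walk_def by auto
  have len: "length ord = n" using distinct_card[OF dist] setord by simp
  have ordn: "ord ! k < n" if "k < length ord" for k
    using nth_mem[OF that] setord by auto
  have sE: "s i \<subseteq> E" if "i < n" for i
  proof -
    have "i \<in> set ord" using setord that by auto
    then obtain k where k: "k < length ord" "ord ! k = i" by (auto simp: in_set_conv_nth)
    then have "s i \<in> Strat i" using br[OF k(1)] unfolding best_response_def by simp
    then show "s i \<subseteq> E" using assms(2) that by auto
  qed
  have SE: "S i \<subseteq> E" if "i<n" for i using assms(2,5) that by auto
  have notin: "ord ! k \<notin> set (take k ord)" if k: "k < length ord" for k
  proof -
    have "distinct (take (Suc k) ord)" using dist by simp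
    then show ?thesis using k by (simp add: take_Suc_conv_app_nth)
  qed
  have takeS: "set (take (Suc k) ord) = insert (ord ! k) (set (take k ord))" if "k < length ord" for k
    using that by (simp add: take_Suc_conv_app_nth)
  have sub: "set (take k ord) \<subseteq> {..<n}" for k using setord set_take_subset by metis
  define Phi where "Phi P = (\<Sum>e\<in>E. \<Sum>j=1..load P s e. lat e (real j))" for P
  have step: "Phi (insert i P) = Phi P + player_cost lat (insert i P) s i"
    if "finite P" "i \<notin> P" "s i \<subseteq> E" for i P
  proof -
    have "Phi (insert i P) = (\<Sum>e\<in>E. (\<Sum>j=1..load P s e. lat e (real j))
        + (if e \<in> s i then lat e (real (load P s e + 1)) else 0))"
      unfolding Phi_def using that by (intro sum.cong) (auto simp: load_insert)
    also have "\<dots> = Phi P + (\<Sum>e\<in>E. if e \<in> s i then lat e (real (load P s e + 1)) else 0)"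
      unfolding Phi_def by (simp add: sum.distrib)
    also have "(\<Sum>e\<in>E. if e \<in> s i then lat e (real (load P s e + 1)) else 0)
        = (\<Sum>e\<in>s i. lat e (real (load P s e + 1)))"
    proof -
      have "{e\<in>E. e \<in> s i} = s i" using that(3) by auto
      then show ?thesis
        using sum.inter_filter[OF assms(1), of "\<lambda>e. lat e (real (load P s e + 1))" "\<lambda>e. e \<in> s i"]
        by simp
    qed
    also have "(\<Sum>e\<in>s i. lat e (real (load P s e + 1))) = player_cost lat (insert i P) s i"
      unfolding player_cost_def using that by (intro sum.cong) (auto simp: load_insert)
    finally show ?thesis .
  qed
  define G where "G i = (\<Sum>e\<in>S i. lat e (real (x e) + 1))" for i
  have brb: "player_cost lat (insert (ord!k) (set (take k ord))) s (ord!k) \<le> G (ord!k)"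
    if k: "k < length ord" for k
  proof -
    let ?i = "ord!k" let ?P = "set (take k ord)"
    have i_n: "?i < n" using ordn[OF k] .
    have "player_cost lat (insert ?i ?P) s ?i \<le> player_cost lat (insert ?i ?P) (s(?i := S ?i)) ?i"
      using br[OF k] assms(5) i_n unfolding best_response_def by auto
    also have "\<dots> = (\<Sum>e\<in>S ?i. lat e (real (load ?P s e + 1)))"
      unfolding player_cost_def using notin[OF k] by (intro sum.cong) (auto simp: load_insert load_upd)
    also have "\<dots> \<le> G ?i" unfolding G_def
    proof (rule sum_mono)
      fix e assume e: "e \<in> S ?i"
      have eE: "e \<in> E" using SE[OF i_n] e by auto
      have "load ?P s e \<le> x e" unfolding x_def by (rule load_mono) (auto simp: sub)
      then show "lat e (real (load ?P s e + 1)) \<le> lat e (real (x e) + 1)"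
        using mono[OF eE] by simp
    qed
    finally show ?thesis .
  qed
  have ind: "k \<le> n \<Longrightarrow> Phi (set (take k ord)) \<le> (\<Sum>m<k. G (ord!m))" for k
  proof (induction k)
    case 0 then show ?case by (simp add: Phi_def load_def)
  next
    case (Suc k)
    then have k: "k < length ord" using len by simp
    have "Phi (set (take (Suc k) ord)) = Phi (set (take k ord))
        + player_cost lat (insert (ord!k) (set (take k ord))) s (ord!k)"
      unfolding takeS[OF k] by (rule step) (auto simp: notin[OF k] sE[OF ordn[OF k]])
    then show ?case using Suc.IH Suc.prems brb[OF k] by simp
  qed
  have "(\<Sum>m<n. G (ord!m)) = (\<Sum>i<n. G i)"
  proof -
    have "(\<Sum>m<n. G (ord!m)) = sum_list (map G ord)"
      using len by (simp add: sum_list_sum_nth atLeast0LessThan)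
    also have "\<dots> = sum G (set ord)" using dist by (simp add: sum.distinct_set_conv_list)
    finally show ?thesis using setord by simp
  qed
  moreover have "set (take n ord) = {..<n}" using len setord by simp
  ultimately have PhiQ: "Phi {..<n} \<le> (\<Sum>i<n. G i)" using ind[of n] by simp
  have Q: "(\<Sum>i<n. G i) = (\<Sum>e\<in>E. real (y e) * lat e (real (x e) + 1))"
    unfolding G_def y_def by (rule dcount[OF assms(1) SE])
  have Ls: "SUM_cost n lat s = (\<Sum>e\<in>E. real (x e) * lat e (real (x e)))"
    unfolding SUM_cost_def player_cost_def x_def by (rule dcount[OF assms(1) sE])
  have LS: "SUM_cost n lat S = (\<Sum>e\<in>E. real (y e) * lat e (real (y e)))"
    unfolding SUM_cost_def player_cost_def y_def by (rule dcount[OF assms(1) SE])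
  have per: "real (x e) * lat e (real (x e)) + (3309/625) * (real (y e) * lat e (real (x e) + 1))
     \<le> (3309/625) * (\<Sum>j=1..x e. lat e (real j)) + (23493/625) * (real (y e) * lat e (real (y e)))"
    if e: "e \<in> E" for e
    using per_res[of "fst (C e)" "fst (snd (C e))" "snd (snd (C e))" "lat e" "x e" "y e"] C e
    by (simp add: mult.assoc)
  have "(\<Sum>e\<in>E. real (x e) * lat e (real (x e)) + (3309/625) * (real (y e) * lat e (real (x e) + 1)))
     \<le> (\<Sum>e\<in>E. (3309/625) * (\<Sum>j=1..x e. lat e (real j)) + (23493/625) * (real (y e) * lat e (real (y e))))"
    by (rule sum_mono) (rule per)
  then have tot: "SUM_cost n lat s + (3309/625) * (\<Sum>i<n. G i) \<le> (3309/625) * Phi {..<n} + (23493/625) * SUM_cost n lat S"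
    unfolding Ls LS Q Phi_def x_def by (simp add: sum.distrib sum_distrib_left)
  have "(3309/625) * Phi {..<n} \<le> (3309/625) * (\<Sum>i<n. G i)" using PhiQ by simp
  then have "SUM_cost n lat s \<le> (23493/625) * SUM_cost n lat S" using tot by linarith
  moreover have "(37.5888::real) = 23493/625" by simp
  ultimately show ?thesis by simp
qed

end
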